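(* Let $(T,\sigma)$ be a gene tree and $S$ a species tree, and let $a,b,c,d\in L(T)$ be genes such that $\sigma(a),\sigma(b),\sigma(c),\sigma(d)$ are pairwise distinct. Set $u:=\operatorname{lca}_S(\sigma(a),\sigma(b),\sigma(c),\sigma(d))$, $v_1:=\operatorname{lca}_S(\sigma(a),\sigma(b))$ and $v_2:=\operatorname{lca}_S(\sigma(c),\sigma(d))$. If $v_1\prec_S u$, $v_2\prec_S u$, and $\overline{T}[a,b,c,d]=(ac|bd)$ or $\overline{T}[a,b,c,d]=(ad|bc)$, then $u\prec_S\mu(\operatorname{lca}_T(a,b,c,d))$ for every reconciliation map $\mu:V(T)\to V(S)\cup E(S)$ without horizontal gene transfer (satisfying (R0)–(R4)). In particular, $\operatorname{lca}_T(a,b,c,d)$ is a duplication event, i.e., $\mu(\operatorname{lca}_T(a,b,c,d))\in E(S)$.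
   Context: A planted phylogenetic tree $T$ has a distinguished leaf $0_T$ (planted root) whose unique neighbour $\rho_T$ is the root; every other inner vertex has at least two children; $L(T)$ are the leaves other than $0_T$. $p\preceq_T q$ means $q$ lies on the path from $p$ to $0_T$; $\operatorname{lca}_T(A)$ is the $\preceq_T$-minimal vertex above all of $A$. A species tree $S$ is a planted phylogenetic tree with planted root $0_S$, root $\rho_S$, leaf set $\mathscr{S}$; $V^0(S)$ are its inner vertices (neither leaves nor $0_S$). The order $\preceq_S$ extends to $V(S)\cup E(S)$ by placing each edge $e=pq$ ($q$ child of $p$) strictly between $q$ and $p$ ($w\prec_S e$ iff $w\preceq_S q$; $e\prec_S w$ iff $p\preceq_S w$; for edges $e=pq$, $e'=p'q'$, $e\prec_S e'$ iff $p\preceq_S q'$); $\operatorname{lca}_S$ is the $\preceq_S$-minimal vertex above the given elements. A gene tree $(T,\sigma)$ is a planted phylogenetic tree with $\sigma:L(T)\to\mathscr{S}$. A reconciliation map without horizontal gene transfer is $\mu:V(T)\to V(S)\cup E(S)$ with: (R0) $\mu(v)=0_S$ iff $v=0_T$; (R1) $\mu(v)=\sigma(v)$ for $v\in L(T)$; (R2) $v\prec_T w\Rightarrow\mu(v)\preceq_S\mu(w)$; for each $v$ with $\mu(v)\in V^0(S)$: (R3.i) $\mu(v)=\operatorname{lca}_S(\mu(v'),\mu(v''))$ for at least two distinct children $v',v''$ of $v$, (R3.ii) $\mu(v'),\mu(v'')$ are $\preceq_S$-incomparable for any two distinct children of $v$; and (R4) for leaves $x,y,z$, if $\mu(\operatorname{lca}_T(x,y))=\mu(\operatorname{lca}_T(x,z))\in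 V^0(S)$ then $\operatorname{lca}_S(\sigma(x),\sigma(y))=\operatorname{lca}_S(\sigma(x),\sigma(z))$. A vertex $v$ is a duplication if $\mu(v)\in E(S)$. The unrooted tree $\overline{T}$ is obtained by deleting $0_T$ and its edge and suppressing $\rho_T$ if it has two children; for four leaves $p,q,r,s$, $\overline{T}[p,q,r,s]$ is the subtree spanned by them with degree-2 vertices suppressed, and $\overline{T}[p,q,r,s]=(pq|rs)$ if some edge of it separates $\{p,q\}$ from $\{r,s\}$. *)

theory Defs
  imports Main
begin

text \<open>Rooted trees are given by a finite vertex set V, a parent map par and the
planted root r0 (with par r0 = r0).\<close>

definition anc :: "('v \<Rightarrow> 'v) \<Rightarrow> 'v \<Rightarrow> 'v \<Rightarrow> bool" where
  "anc par x y \<longleftrightarrow> (\<exists>k. (par ^^ k) x = y)"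

definition children :: "'v set \<Rightarrow> ('v \<Rightarrow> 'v) \<Rightarrow> 'v \<Rightarrow> 'v \<Rightarrow> 'v set" where
  "children V par r0 v = {w \<in> V. w \<noteq> r0 \<and> par w = v}"

definition leaves :: "'v set \<Rightarrow> ('v \<Rightarrow> 'v) \<Rightarrow> 'v \<Rightarrow> 'v set" where
  "leaves V par r0 = {v \<in> V. v \<noteq> r0 \<and> children V par r0 v = {}}"

definition inner :: "'v set \<Rightarrow> ('v \<Rightarrow> 'v) \<Rightarrow> 'v \<Rightarrow> 'v set" where
  "inner V par r0 = {v \<in> V. v \<noteq> r0 \<and> children V par r0 v \<noteq> {}}"

definition planted_phylo :: "'v set \<Rightarrow> ('v \<Rightarrow> 'v) \<Rightarrow> 'v \<Rightarrow> bool" where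
  "planted_phylo V par r0 \<longleftrightarrow>
     finite V \<and> r0 \<in> V \<and> par r0 = r0 \<and>
     (\<forall>v\<in>V. par v \<in> V \<and> anc par v r0) \<and>
     card (children V par r0 r0) = 1 \<and>
     (\<forall>v\<in>inner V par r0. card (children V par r0 v) \<ge> 2)"

definition lcaT :: "'v set \<Rightarrow> ('v \<Rightarrow> 'v) \<Rightarrow> 'v set \<Rightarrow> 'v" where
  "lcaT V par A = (THE x. x \<in> V \<and> (\<forall>a\<in>A. anc par a x) \<and>
      (\<forall>y\<in>V. (\<forall>a\<in>A. anc par a y) \<longrightarrow> anc par x y))"

text \<open>Elements of V(S) \<union> E(S): a vertex, or an edge (p,q) with q a child of p.\<close>
datatype 'w place = Vx 'w | Ed 'w 'w

definition edges :: "'w set \<Rightarrow> ('w \<Rightarrow> 'w) \<Rightarrow> 'w \<Rightarrow> 'w place set" where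
  "edges V par r0 = {Ed (par q) q | q. q \<in> V \<and> q \<noteq> r0}"

text \<open>The strict order \<prec>_S extended to V(S) \<union> E(S), edges e = pq placed strictly
between q and p.\<close>
fun plt :: "('w \<Rightarrow> 'w) \<Rightarrow> 'w place \<Rightarrow> 'w place \<Rightarrow> bool" where
  "plt par (Vx w) (Vx w') = (anc par w w' \<and> w \<noteq> w')"
| "plt par (Vx w) (Ed p q) = anc par w q"
| "plt par (Ed p q) (Vx w) = anc par p w"
| "plt par (Ed p q) (Ed p' q') = anc par p q'"

definition ple :: "('w \<Rightarrow> 'w) \<Rightarrow> 'w place \<Rightarrow> 'w place \<Rightarrow> bool" where
  "ple par x y \<longleftrightarrow> x = y \<or> plt par x y"

definition lcaS :: "'w set \<Rightarrow> ('w \<Rightarrow> 'w) \<Rightarrow> 'w place set \<Rightarrow> 'w" where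
  "lcaS V par A = (THE w. w \<in> V \<and> (\<forall>x\<in>A. ple par x (Vx w)) \<and>
      (\<forall>w'\<in>V. (\<forall>x\<in>A. ple par x (Vx w')) \<longrightarrow> anc par w w'))"

definition reconciliation ::
  "'v set \<Rightarrow> ('v \<Rightarrow> 'v) \<Rightarrow> 'v \<Rightarrow> ('v \<Rightarrow> 'w) \<Rightarrow>
   'w set \<Rightarrow> ('w \<Rightarrow> 'w) \<Rightarrow> 'w \<Rightarrow> ('v \<Rightarrow> 'w place) \<Rightarrow> bool" where
  "reconciliation VT parT r0T \<sigma> VS parS r0S \<mu> \<longleftrightarrow>
     (\<forall>v\<in>VT. \<mu> v \<in> Vx ` VS \<union> edges VS parS r0S) \<and>
     (\<forall>v\<in>VT. \<mu> v = Vx r0S \<longleftrightarrow> v = r0T) \<and>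
     (\<forall>v\<in>leaves VT parT r0T. \<mu> v = Vx (\<sigma> v)) \<and>
     (\<forall>v\<in>VT. \<forall>w\<in>VT. anc parT v w \<and> v \<noteq> w \<longrightarrow> ple parS (\<mu> v) (\<mu> w)) \<and>
     (\<forall>v\<in>VT. \<mu> v \<in> Vx ` inner VS parS r0S \<longrightarrow>
        (\<exists>v'\<in>children VT parT r0T v. \<exists>v''\<in>children VT parT r0T v. v' \<noteq> v'' \<and>
            \<mu> v = Vx (lcaS VS parS {\<mu> v', \<mu> v''})) \<and>
        (\<forall>v'\<in>children VT parT r0T v. \<forall>v''\<in>children VT parT r0T v. v' \<noteq> v'' \<longrightarrow>
            \<not> ple parS (\<mu> v') (\<mu> v'') \<and> \<not> ple parS (\<mu> v'') (\<mu> v'))) \<and>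
     (\<forall>x\<in>leaves VT parT r0T. \<forall>y\<in>leaves VT parT r0T. \<forall>z\<in>leaves VT parT r0T.
        \<mu> (lcaT VT parT {x, y}) = \<mu> (lcaT VT parT {x, z}) \<and>
        \<mu> (lcaT VT parT {x, y}) \<in> Vx ` inner VS parS r0S \<longrightarrow>
        lcaS VS parS {Vx (\<sigma> x), Vx (\<sigma> y)} = lcaS VS parS {Vx (\<sigma> x), Vx (\<sigma> z)})"

text \<open>The spanned subtree on Q is the union of these
paths.  An edge {x, par x} of it (not the edge at the planted root, which is deleted in
the unrooted tree) separates {p,q} from {r,s} iff, after removing it, p,q lie in the
part below x and r,s in the other part (or vice versa).  Suppressing degree-2 vertices
only merges edges and does not change which separations exist.\<close>
definition on_path :: "'v set \<Rightarrow> ('v \<Rightarrow> 'v) \<Rightarrow> 'v \<Rightarrow> 'v \<Rightarrow> 'v \<Rightarrow> bool" where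
  "on_path V par x y w \<longleftrightarrow> anc par w (lcaT V par {x, y}) \<and> (anc par x w \<or> anc par y w)"

definition spanned :: "'v set \<Rightarrow> ('v \<Rightarrow> 'v) \<Rightarrow> 'v set \<Rightarrow> 'v set" where
  "spanned V par Q = {w \<in> V. \<exists>x\<in>Q. \<exists>y\<in>Q. on_path V par x y w}"

definition quartet :: "'v set \<Rightarrow> ('v \<Rightarrow> 'v) \<Rightarrow> 'v \<Rightarrow> 'v \<Rightarrow> 'v \<Rightarrow> 'v \<Rightarrow> 'v \<Rightarrow> bool" where
  "quartet V par r0 p q r s \<longleftrightarrow>
     (\<exists>x\<in>V. x \<noteq> r0 \<and> par x \<noteq> r0 \<and>
        x \<in> spanned V par {p, q, r, s} \<and> par x \<in> spanned V par {p, q, r, s} \<and>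
        ((anc par p x \<and> anc par q x \<and> \<not> anc par r x \<and> \<not> anc par s x) \<or>
         (anc par r x \<and> anc par s x \<and> \<not> anc par p x \<and> \<not> anc par q x)))"

end

theory Submission
  imports Defs
begin


definition tree :: "'v set \<Rightarrow> ('v \<Rightarrow> 'v) \<Rightarrow> 'v \<Rightarrow> bool" where
  "tree V par r0 \<longleftrightarrow> r0 \<in> V \<and> par r0 = r0 \<and> (\<forall>v\<in>V. par v \<in> V \<and> anc par v r0)"

lemma phylo_tree: "planted_phylo V par r0 \<Longrightarrow> tree V par r0"
  unfolding planted_phylo_def tree_def by auto

lemma anc_refl[simp]: "anc par x x"
  unfolding anc_def by (rule exI[of _ 0]) simp

lemma anc_trans: "anc par x y \<Longrightarrow> anc par y z \<Longrightarrow> anc par x z"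
proof -
  assume "anc par x y" "anc par y z"
  then obtain i j where "(par ^^ i) x = y" "(par ^^ j) y = z" unfolding anc_def by blast
  then have "(par ^^ (j + i)) x = z" by (simp add: funpow_add)
  then show ?thesis unfolding anc_def by blast
qed

lemma anc_par1: "anc par x (par x)"
  unfolding anc_def by (rule exI[of _ 1]) simp

lemma funpow_split: "i \<le> j \<Longrightarrow> (f ^^ j) x = (f ^^ (j - i)) ((f ^^ i) x)"
proof -
  assume "i \<le> j"
  then have "(f ^^ j) x = (f ^^ ((j - i) + i)) x" by simp
  also have "\<dots> = (f ^^ (j - i)) ((f ^^ i) x)" by (simp only: funpow_add comp_apply)
  finally show ?thesis .
qed

lemma anc_comp: "anc par x y \<Longrightarrow> anc par x z \<Longrightarrow> anc par y z \<or> anc par z y"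
proof -
  assume "anc par x y" "anc par x z"
  then obtain i j where i: "(par ^^ i) x = y" and j: "(par ^^ j) x = z" unfolding anc_def by blast
  show ?thesis
  proof (cases "i \<le> j")
    case True
    then have "(par ^^ (j - i)) y = z" using i j funpow_split[of i j par x] by simp
    then show ?thesis unfolding anc_def by blast
  next
    case False
    then have "(par ^^ (i - j)) z = y" using i j funpow_split[of j i par x] by simp
    then show ?thesis unfolding anc_def by blast
  qed
qed

lemma anc_step: "anc par x y \<Longrightarrow> x \<noteq> y \<Longrightarrow> anc par (par x) y"
proof -
  assume "anc par x y" "x \<noteq> y"
  then obtain k where k: "(par ^^ k) x = y" unfolding anc_def by blast
  then obtain m where m: "k = Suc m" using \<open>x \<noteq> y\<close> by (cases k) auto
  have "(par ^^ m) (par x) = y" using k unfolding m funpow_Suc_right by simp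
  then show ?thesis unfolding anc_def by blast
qed

lemma funpow_closed: "x \<in> V \<Longrightarrow> \<forall>v\<in>V. par v \<in> V \<Longrightarrow> (par ^^ k) x \<in> V"
  by (induction k) auto

lemma funpow_fix: "par r = r \<Longrightarrow> (par ^^ k) r = r"
  by (induction k) auto

lemma anc_antisym:
  assumes t: "tree V par r0" and x: "x \<in> V" and xy: "anc par x y" and yx: "anc par y x"
  shows "x = y"
proof (rule ccontr)
  assume ne: "x \<noteq> y"
  obtain i j where i: "(par ^^ i) x = y" and j: "(par ^^ j) y = x" using xy yx unfolding anc_def by blast
  have m: "(par ^^ (j + i)) x = x" using i j by (simp add: funpow_add)
  have ipos: "i \<ge> 1" using i ne by (cases i) auto
  have per: "(par ^^ (n * (j + i))) x = x" for n
  proof (induction n)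
    case 0 then show ?case by simp
  next
    case (Suc n)
    have "(par ^^ (Suc n * (j + i))) x = (par ^^ (j + i)) ((par ^^ (n * (j + i))) x)"
      by (simp add: funpow_add add.commute)
    then show ?case using Suc m by simp
  qed
  obtain n where n: "(par ^^ n) x = r0" using t x unfolding tree_def anc_def by blast
  have r: "par r0 = r0" using t unfolding tree_def by blast
  have "n \<le> n * (j + i)" using ipos by simp
  then have "(par ^^ (n * (j + i))) x = (par ^^ (n * (j + i) - n)) ((par ^^ n) x)"
    by (rule funpow_split)
  also have "\<dots> = r0" using n funpow_fix[of par r0, OF r] by simp
  finally have "x = r0" using per by simp
  then have "y = r0" using i funpow_fix[of par r0, OF r] by simp
  then show False using ne \<open>x = r0\<close> by simp
qed

lemma par_fix_root: "tree V par r0 \<Longrightarrow> v \<in> V \<Longrightarrow> par v = v \<Longrightarrow> v = r0"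
proof -
  assume t: "tree V par r0" and v: "v \<in> V" "par v = v"
  have "anc par v r0" using t v unfolding tree_def by blast
  then obtain n where "(par ^^ n) v = r0" unfolding anc_def by blast
  then show "v = r0" using funpow_fix[of par v n] v by simp
qed

lemma child_exists:
  assumes t: "tree V par r0" and "x \<in> V" and "anc par x w" and "x \<noteq> w"
  shows "\<exists>w'\<in>children V par r0 w. anc par x w'"
proof -
  obtain k where k: "(par ^^ k) x = w" using assms unfolding anc_def by blast
  have cl: "\<forall>v\<in>V. par v \<in> V" and r: "par r0 = r0" using t unfolding tree_def by auto
  show ?thesis using k \<open>x \<in> V\<close> \<open>x \<noteq> w\<close>
  proof (induction k arbitrary: x)
    case 0 then show ?case by simp
  next
    case (Suc k)
    show ?case
    proof (cases "par x = w")
      case True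
      have "x \<noteq> r0" using True Suc.prems r by auto
      then have "x \<in> children V par r0 w" using True Suc.prems unfolding children_def by auto
      then show ?thesis using anc_refl[of par x] by blast
    next
      case False
      have "(par ^^ k) (par x) = w" using Suc.prems by (simp add: funpow_Suc_right del: funpow.simps)
      then obtain w' where "w' \<in> children V par r0 w" "anc par (par x) w'"
        using Suc.IH[of "par x"] False cl Suc.prems by auto
      then show ?thesis by (meson anc_par1 anc_trans)
    qed
  qed
qed

lemma lca_props:
  assumes t: "tree V par r0" and B: "B \<subseteq> V" "B \<noteq> {}"
  shows "lcaT V par B \<in> V \<and> (\<forall>b\<in>B. anc par b (lcaT V par B)) \<and>
         (\<forall>y\<in>V. (\<forall>b\<in>B. anc par b y) \<longrightarrow> anc par (lcaT V par B) y)"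
proof -
  let ?P = "\<lambda>x. x \<in> V \<and> (\<forall>a\<in>B. anc par a x) \<and> (\<forall>y\<in>V. (\<forall>a\<in>B. anc par a y) \<longrightarrow> anc par x y)"
  obtain b0 where b0: "b0 \<in> B" using B by blast
  have cl: "\<forall>v\<in>V. par v \<in> V" and r: "par r0 = r0" and r0: "r0 \<in> V" using t unfolding tree_def by auto
  have b0V: "b0 \<in> V" using b0 B by blast
  have "anc par b0 r0" using t b0V unfolding tree_def by blast
  then obtain n where n: "(par ^^ n) b0 = r0" unfolding anc_def by blast
  have "\<forall>b\<in>B. anc par b r0" using t B unfolding tree_def by blast
  then have "\<forall>b\<in>B. anc par b ((par ^^ n) b0)" using n by simp
  then have ex: "\<exists>k. \<forall>b\<in>B. anc par b ((par ^^ k) b0)" by blast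
  define k where "k = (LEAST k. \<forall>b\<in>B. anc par b ((par ^^ k) b0))"
  have kP: "\<forall>b\<in>B. anc par b ((par ^^ k) b0)" unfolding k_def by (rule LeastI_ex[OF ex])
  have Pl: "?P ((par ^^ k) b0)"
  proof (intro conjI ballI impI)
    show "(par ^^ k) b0 \<in> V" by (rule funpow_closed[OF b0V cl])
    show "\<And>a. a \<in> B \<Longrightarrow> anc par a ((par ^^ k) b0)" using kP by blast
    fix y assume "y \<in> V" "\<forall>a\<in>B. anc par a y"
    then obtain j where j: "(par ^^ j) b0 = y" using b0 unfolding anc_def by blast
    have "\<forall>b\<in>B. anc par b ((par ^^ j) b0)" using j \<open>\<forall>a\<in>B. anc par a y\<close> by simp
    then have "k \<le> j" unfolding k_def by (rule Least_le)
    then have "(par ^^ (j - k)) ((par ^^ k) b0) = y" using j funpow_split[of k j par b0] by simp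
    then show "anc par ((par ^^ k) b0) y" unfolding anc_def by blast
  qed
  define l where "l = (par ^^ k) b0"
  have Pl': "?P l" using Pl unfolding l_def .
  have uq: "x = l" if H: "?P x" for x
  proof -
    have xV: "x \<in> V" using H by (rule conjunct1)
    have "\<forall>a\<in>B. anc par a l" using Pl' by blast
    moreover have "l \<in> V" using Pl' by (rule conjunct1)
    ultimately have 1: "anc par x l" using H by blast
    have "\<forall>a\<in>B. anc par a x" using H by blast
    then have 2: "anc par l x" using Pl' xV by blast
    show ?thesis using anc_antisym[OF t xV 1 2] .
  qed
  have "lcaT V par B = l" unfolding lcaT_def
    by (rule the_equality) (rule Pl', erule uq)
  then have "lcaT V par B = (par ^^ k) b0" unfolding l_def .
  then show ?thesis using Pl by simp
qed

lemma ple_VxVx[simp]: "ple par (Vx x) (Vx y) \<longleftrightarrow> anc par x y"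
  unfolding ple_def by auto

lemma ple_VxEd[simp]: "ple par (Vx x) (Ed p q) \<longleftrightarrow> anc par x q"
  unfolding ple_def by auto

lemma lcaS_img: "lcaS V par (Vx ` B) = lcaT V par B"
  unfolding lcaS_def lcaT_def by simp

lemma lcaS2: "lcaS V par {Vx x, Vx y} = lcaT V par {x, y}"
  using lcaS_img[of V par "{x,y}"] by simp

lemma lcaS4: "lcaS V par {Vx x, Vx y, Vx z, Vx z'} = lcaT V par {x, y, z, z'}"
  using lcaS_img[of V par "{x,y,z,z'}"] by simp

lemma lca_not_root:
  assumes p: "planted_phylo V par r0" and B: "B \<subseteq> V - {r0}" "B \<noteq> {}"
  shows "lcaT V par B \<noteq> r0"
proof
  assume l: "lcaT V par B = r0"
  have t: "tree V par r0" using p by (rule phylo_tree)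
  obtain \<rho> where ch: "children V par r0 r0 = {\<rho>}" using p unfolding planted_phylo_def
    by (meson card_1_singletonE)
  have \<rho>: "\<rho> \<in> V" "\<rho> \<noteq> r0" using ch unfolding children_def by auto
  have "\<forall>b\<in>B. anc par b \<rho>"
  proof
    fix b assume "b \<in> B"
    then have "b \<in> V" "b \<noteq> r0" "anc par b r0" using B t unfolding tree_def by auto
    then show "anc par b \<rho>" using child_exists[OF t, of b r0] ch by auto
  qed
  then have "anc par r0 \<rho>" using lca_props[OF t, of B] B \<rho> l by auto
  moreover have "anc par \<rho> r0" using t \<rho> unfolding tree_def by auto
  ultimately show False using anc_antisym[OF t, of \<rho> r0] \<rho> by auto
qed

lemma leaf_anc:
  assumes t: "tree V par r0" and l: "t \<in> leaves V par r0" and s: "s \<in> V" "anc par s t"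
  shows "s = t"
  using child_exists[OF t s] l unfolding leaves_def by blast

lemma place_lca:
  assumes t: "tree V par r0" and B: "B \<subseteq> V" "B \<noteq> {}"
    and P: "P \<in> Vx ` V \<union> edges V par r0" and le: "\<forall>s\<in>B. ple par (Vx s) P"
  shows "ple par (Vx (lcaT V par B)) P"
  using P le lca_props[OF t B] unfolding edges_def by auto

lemma anc_comp_step: "anc par y p \<Longrightarrow> anc par y q \<Longrightarrow> p \<noteq> q \<Longrightarrow> anc par q p \<Longrightarrow> anc par (par q) p"
  using anc_step by metis

lemma place_comp:
  assumes P: "P \<in> Vx ` V \<union> edges V par r0" and Q: "Q \<in> Vx ` V \<union> edges V par r0"
    and yP: "ple par (Vx y) P" and yQ: "ple par (Vx y) Q"
  shows "ple par P Q \<or> ple par Q P"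
proof -
  have E: "R \<in> Vx ` V \<union> edges V par r0 \<Longrightarrow> (\<exists>p. R = Vx p) \<or> (\<exists>q. R = Ed (par q) q)" for R
    unfolding edges_def by auto
  consider p p' where "P = Vx p" "Q = Vx p'" | p q' where "P = Vx p" "Q = Ed (par q') q'"
    | q p' where "P = Ed (par q) q" "Q = Vx p'" | q q' where "P = Ed (par q) q" "Q = Ed (par q') q'"
    using E[OF P] E[OF Q] by blast
  then show ?thesis
  proof cases
    case (1 p p')
    then show ?thesis using yP yQ anc_comp[of par y p p'] by auto
  next
    case (2 p q')
    then have "anc par y p" "anc par y q'" using yP yQ by auto
    then show ?thesis using 2 anc_comp[of par y p q'] anc_step[of par q' p]
      by (cases "p = q'") (auto simp: ple_def)
  next
    case (3 q p')
    then have "anc par y p'" "anc par y q" using yP yQ by auto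
    then show ?thesis using 3 anc_comp[of par y p' q] anc_step[of par q p']
      by (cases "p' = q") (auto simp: ple_def)
  next
    case (4 q q')
    then have "anc par y q" "anc par y q'" using yP yQ by auto
    then show ?thesis using 4 anc_comp[of par y q q'] anc_step[of par q' q] anc_step[of par q q']
      by (cases "q = q'") (auto simp: ple_def)
  qed
qed

lemma ple_trans_Vx: "anc par s u \<Longrightarrow> ple par (Vx u) P \<Longrightarrow> ple par (Vx s) P"
  by (cases P) (auto intro: anc_trans)


lemma core:
  assumes t: "tree V par r0" and S: "sa \<in> V" "sb \<in> V" "sc \<in> V" "sd \<in> V"
    and v1: "anc par (lcaT V par {sa, sb}) (lcaT V par {sa, sb, sc, sd})"
            "lcaT V par {sa, sb} \<noteq> lcaT V par {sa, sb, sc, sd}"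
    and v2: "anc par (lcaT V par {sc, sd}) (lcaT V par {sa, sb, sc, sd})"
            "lcaT V par {sc, sd} \<noteq> lcaT V par {sa, sb, sc, sd}"
    and s1: "s1 \<in> {sa, sb}" and s2: "s2 \<in> {sc, sd}"
  shows "lcaT V par {s1, s2} = lcaT V par {sa, sb, sc, sd}"
proof -
  define u where "u = lcaT V par {sa, sb, sc, sd}"
  define x1 where "x1 = lcaT V par {sa, sb}"
  define x2 where "x2 = lcaT V par {sc, sd}"
  define z where "z = lcaT V par {s1, s2}"
  have U: "u \<in> V" "anc par sa u" "anc par sb u" "anc par sc u" "anc par sd u"
    "\<And>y. y \<in> V \<Longrightarrow> anc par sa y \<Longrightarrow> anc par sb y \<Longrightarrow> anc par sc y \<Longrightarrow> anc par sd y \<Longrightarrow> anc par u y"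
    using lca_props[OF t, of "{sa, sb, sc, sd}"] S unfolding u_def by auto
  have X1: "x1 \<in> V" "anc par sa x1" "anc par sb x1"
    "\<And>y. y \<in> V \<Longrightarrow> anc par sa y \<Longrightarrow> anc par sb y \<Longrightarrow> anc par x1 y"
    using lca_props[OF t, of "{sa, sb}"] S unfolding x1_def by auto
  have X2: "x2 \<in> V" "anc par sc x2" "anc par sd x2"
    "\<And>y. y \<in> V \<Longrightarrow> anc par sc y \<Longrightarrow> anc par sd y \<Longrightarrow> anc par x2 y"
    using lca_props[OF t, of "{sc, sd}"] S unfolding x2_def by auto
  have s1V: "s1 \<in> V" "s2 \<in> V" using s1 s2 S by auto
  have Z: "z \<in> V" "anc par s1 z" "anc par s2 z"
    "\<And>y. y \<in> V \<Longrightarrow> anc par s1 y \<Longrightarrow> anc par s2 y \<Longrightarrow> anc par z y"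
    using lca_props[OF t, of "{s1, s2}"] s1V unfolding z_def by auto
  have zu: "anc par z u" using Z(4)[OF U(1)] s1 s2 U by auto
  have s1x: "anc par s1 x1" using s1 X1 by auto
  have s2x: "anc par s2 x2" using s2 X2 by auto
  have v1': "anc par x1 u" "x1 \<noteq> u" and v2': "anc par x2 u" "x2 \<noteq> u"
    using v1 v2 unfolding x1_def x2_def u_def by auto
  have no1: "\<not> anc par x2 x1"
  proof
    assume "anc par x2 x1"
    then have "anc par u x1" using U(6)[OF X1(1)] X1 X2 anc_trans by metis
    then show False using anc_antisym[OF t X1(1)] v1' by blast
  qed
  have no2: "\<not> anc par x1 x2"
  proof
    assume "anc par x1 x2"
    then have "anc par u x2" using U(6)[OF X2(1)] X1 X2 anc_trans by metis
    then show False using anc_antisym[OF t X2(1)] v2' by blast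
  qed
  have c1: "anc par z x1 \<or> anc par x1 z" using anc_comp[OF Z(2) s1x] .
  have c2: "anc par z x2 \<or> anc par x2 z" using anc_comp[OF Z(3) s2x] .
  have "z = u"
  proof (cases "anc par x1 z \<and> anc par x2 z")
    case True
    then have "anc par u z" using U(6)[OF Z(1)] X1 X2 anc_trans by metis
    then show ?thesis using anc_antisym[OF t Z(1) zu] by simp
  next
    case False
    then consider "anc par x1 z" "anc par z x2" | "anc par z x1" "anc par x2 z"
      | "anc par z x1" "anc par z x2" using c1 c2 by blast
    then show ?thesis
    proof cases
      case 1 then show ?thesis using no2 anc_trans by metis
    next
      case 2 then show ?thesis using no1 anc_trans by metis
    next
      case 3 then show ?thesis using no1 no2 anc_comp by metis
    qed
  qed
  then show ?thesis unfolding z_def u_def .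
qed



theorem theorem2:
  fixes VT :: "'v set" and parT :: "'v \<Rightarrow> 'v" and r0T :: 'v and \<sigma> :: "'v \<Rightarrow> 'w"
    and VS :: "'w set" and parS :: "'w \<Rightarrow> 'w" and r0S :: 'w
    and \<mu> :: "'v \<Rightarrow> 'w place" and a b c d :: 'v
  assumes T: "planted_phylo VT parT r0T"
    and S: "planted_phylo VS parS r0S"
    and \<sigma>: "\<sigma> ` leaves VT parT r0T \<subseteq> leaves VS parS r0S"
    and leaves: "a \<in> leaves VT parT r0T" "b \<in> leaves VT parT r0T"
                "c \<in> leaves VT parT r0T" "d \<in> leaves VT parT r0T"
    and distinct: "distinct [\<sigma> a, \<sigma> b, \<sigma> c, \<sigma> d]"
    and v1: "anc parS (lcaS VS parS {Vx (\<sigma> a), Vx (\<sigma> b)})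
                 (lcaS VS parS {Vx (\<sigma> a), Vx (\<sigma> b), Vx (\<sigma> c), Vx (\<sigma> d)})"
            "lcaS VS parS {Vx (\<sigma> a), Vx (\<sigma> b)}
               \<noteq> lcaS VS parS {Vx (\<sigma> a), Vx (\<sigma> b), Vx (\<sigma> c), Vx (\<sigma> d)}"
    and v2: "anc parS (lcaS VS parS {Vx (\<sigma> c), Vx (\<sigma> d)})
                 (lcaS VS parS {Vx (\<sigma> a), Vx (\<sigma> b), Vx (\<sigma> c), Vx (\<sigma> d)})"
            "lcaS VS parS {Vx (\<sigma> c), Vx (\<sigma> d)}
               \<noteq> lcaS VS parS {Vx (\<sigma> a), Vx (\<sigma> b), Vx (\<sigma> c), Vx (\<sigma> d)}"
    and Q: "quartet VT parT r0T a c b d \<or> quartet VT parT r0T a d b c"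
    and \<mu>: "reconciliation VT parT r0T \<sigma> VS parS r0S \<mu>"
  shows "plt parS (Vx (lcaS VS parS {Vx (\<sigma> a), Vx (\<sigma> b), Vx (\<sigma> c), Vx (\<sigma> d)}))
                  (\<mu> (lcaT VT parT {a, b, c, d}))
         \<and> \<mu> (lcaT VT parT {a, b, c, d}) \<in> edges VS parS r0S"
proof -
  have tT: "tree VT parT r0T" using T by (rule phylo_tree)
  have tS: "tree VS parS r0S" using S by (rule phylo_tree)
  note Rall = \<mu>[unfolded reconciliation_def]
  have R0: "\<forall>v\<in>VT. \<mu> v \<in> Vx ` VS \<union> edges VS parS r0S" using Rall by (rule conjunct1)
  have R0': "\<forall>v\<in>VT. \<mu> v = Vx r0S \<longleftrightarrow> v = r0T" using Rall[THEN conjunct2] by (rule conjunct1)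
  have R1: "\<forall>v\<in>leaves VT parT r0T. \<mu> v = Vx (\<sigma> v)"
    using Rall[THEN conjunct2, THEN conjunct2] by (rule conjunct1)
  have R2: "\<forall>v\<in>VT. \<forall>w\<in>VT. anc parT v w \<and> v \<noteq> w \<longrightarrow> ple parS (\<mu> v) (\<mu> w)"
    using Rall[THEN conjunct2, THEN conjunct2, THEN conjunct2] by (rule conjunct1)
  have R3f: "\<forall>v\<in>VT. \<mu> v \<in> Vx ` inner VS parS r0S \<longrightarrow>
        (\<exists>v'\<in>children VT parT r0T v. \<exists>v''\<in>children VT parT r0T v. v' \<noteq> v'' \<and>
            \<mu> v = Vx (lcaS VS parS {\<mu> v', \<mu> v''})) \<and>
        (\<forall>v'\<in>children VT parT r0T v. \<forall>v''\<in>children VT parT r0T v. v' \<noteq> v'' \<longrightarrow>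
            \<not> ple parS (\<mu> v') (\<mu> v'') \<and> \<not> ple parS (\<mu> v'') (\<mu> v'))"
    using Rall[THEN conjunct2, THEN conjunct2, THEN conjunct2, THEN conjunct2] by (rule conjunct1)
  have R3: "\<not> ple parS (\<mu> v') (\<mu> v'') \<and> \<not> ple parS (\<mu> v'') (\<mu> v')"
    if "v \<in> VT" "\<mu> v \<in> Vx ` inner VS parS r0S" "v' \<in> children VT parT r0T v"
       "v'' \<in> children VT parT r0T v" "v' \<noteq> v''" for v v' v''
  proof -
    note C = mp[OF bspec[OF R3f that(1)] that(2)]
    have "(\<forall>v'\<in>children VT parT r0T v. \<forall>v''\<in>children VT parT r0T v. v' \<noteq> v'' \<longrightarrow>
            \<not> ple parS (\<mu> v') (\<mu> v'') \<and> \<not> ple parS (\<mu> v'') (\<mu> v'))"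
      using C by (rule conjunct2)
    then show ?thesis using that(3-5) by blast
  qed
  let ?L = "{a, b, c, d}"
  have LV: "?L \<subseteq> VT" "?L \<subseteq> VT - {r0T}" using leaves unfolding leaves_def by auto
  have LL: "?L \<subseteq> leaves VT parT r0T" using leaves by auto
  have sL: "\<sigma> x \<in> VS" "\<sigma> x \<noteq> r0S" if "x \<in> ?L" for x
    using \<sigma> LL that unfolding leaves_def by auto
  have dist: "\<sigma> x \<noteq> \<sigma> y" if "x \<in> ?L" "y \<in> ?L" "x \<noteq> y" for x y
    using distinct that by auto
  have leq: "x = y" if "x \<in> ?L" "y \<in> ?L" "anc parT x y" for x y
    using leaf_anc[OF tT, of y x] that LL LV by auto
  define w where "w = lcaT VT parT ?L"
  have W: "w \<in> VT" "\<forall>x\<in>?L. anc parT x w"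
    "\<forall>y\<in>VT. (\<forall>x\<in>?L. anc parT x y) \<longrightarrow> anc parT w y"
    using lca_props[OF tT, of ?L] LV unfolding w_def by auto
  have wr: "w \<noteq> r0T" unfolding w_def using lca_not_root[OF T, of ?L] LV by auto
  have wL: "w \<noteq> x" if "x \<in> ?L" for x
  proof
    assume "w = x"
    then have "\<forall>y\<in>?L. y = x" using leq W that by metis
    moreover have "a \<noteq> b" using distinct by auto
    ultimately show False by auto
  qed
  define u where "u = lcaT VS parS (\<sigma> ` ?L)"
  have uu: "lcaS VS parS {Vx (\<sigma> a), Vx (\<sigma> b), Vx (\<sigma> c), Vx (\<sigma> d)} = u"
    unfolding u_def lcaS4 by simp
  have U: "u \<in> VS" "\<forall>x\<in>?L. anc parS (\<sigma> x) u"
    using lca_props[OF tS, of "\<sigma> ` ?L"] sL unfolding u_def by auto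
  have v1': "anc parS (lcaT VS parS {\<sigma> a, \<sigma> b}) (lcaT VS parS {\<sigma> a, \<sigma> b, \<sigma> c, \<sigma> d})"
     "lcaT VS parS {\<sigma> a, \<sigma> b} \<noteq> lcaT VS parS {\<sigma> a, \<sigma> b, \<sigma> c, \<sigma> d}"
    and v2': "anc parS (lcaT VS parS {\<sigma> c, \<sigma> d}) (lcaT VS parS {\<sigma> a, \<sigma> b, \<sigma> c, \<sigma> d})"
     "lcaT VS parS {\<sigma> c, \<sigma> d} \<noteq> lcaT VS parS {\<sigma> a, \<sigma> b, \<sigma> c, \<sigma> d}"
    using v1 v2 unfolding lcaS2 lcaS4 by auto
  have u4: "lcaT VS parS {\<sigma> a, \<sigma> b, \<sigma> c, \<sigma> d} = u" unfolding u_def by simp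
  obtain x p q t0 where X: "x \<in> VT" "anc parT p x" "anc parT q x" "p \<in> {a, b}" "q \<in> {c, d}"
    "t0 \<in> ?L" "\<not> anc parT t0 x" "x \<in> spanned VT parT ?L"
  proof -
    have e1: "{a, c, b, d} = ?L" "{a, d, b, c} = ?L" by auto
    from Q[unfolded quartet_def e1] show ?thesis
    proof (elim disjE bexE conjE)
      fix x assume "x \<in> VT" "x \<in> spanned VT parT ?L" "anc parT a x" "anc parT c x" "\<not> anc parT b x"
      then show ?thesis using that[of x a c b] by blast
    next
      fix x assume "x \<in> VT" "x \<in> spanned VT parT ?L" "anc parT b x" "anc parT d x" "\<not> anc parT a x"
      then show ?thesis using that[of x b d a] by blast
    next
      fix x assume "x \<in> VT" "x \<in> spanned VT parT ?L" "anc parT a x" "anc parT d x" "\<not> anc parT b x"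
      then show ?thesis using that[of x a d b] by blast
    next
      fix x assume "x \<in> VT" "x \<in> spanned VT parT ?L" "anc parT b x" "anc parT c x" "\<not> anc parT a x"
      then show ?thesis using that[of x b c a] by blast
    qed
  qed
  have xw: "anc parT x w"
  proof -
    obtain y1 y2 where y: "y1 \<in> ?L" "y2 \<in> ?L" "anc parT x (lcaT VT parT {y1, y2})"
      using X(8) unfolding spanned_def on_path_def by blast
    have "anc parT (lcaT VT parT {y1, y2}) w"
      using lca_props[OF tT, of "{y1, y2}"] y LV W by auto
    then show ?thesis using y anc_trans by metis
  qed
  have xnw: "x \<noteq> w" using X W by metis
  obtain w' where w': "w' \<in> children VT parT r0T w" "anc parT x w'"
    using child_exists[OF tT X(1) xw xnw] by blast
  have w'V: "w' \<in> VT" "parT w' = w" "w' \<noteq> r0T" using w' unfolding children_def by auto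
  have pL: "p \<in> ?L" "q \<in> ?L" using X by auto
  have pq: "p \<noteq> q" using X(4,5) distinct by auto
  have pw': "anc parT p w'" "anc parT q w'" using X w' anc_trans by metis+
  have pnw': "p \<noteq> w'" "q \<noteq> w'" using pw' leq pL pq by metis+
  have mp: "ple parS (Vx (\<sigma> p)) (\<mu> w')" "ple parS (Vx (\<sigma> q)) (\<mu> w')"
    using R2 R1 pw' pnw' w'V LV pL LL by (metis subsetD)+
  have core': "lcaT VS parS {\<sigma> p, \<sigma> q} = u"
    using core[OF tS _ _ _ _ v1' v2', of "\<sigma> p" "\<sigma> q"] sL X(4,5) u4 by auto
  have uw': "ple parS (Vx u) (\<mu> w')"
    using place_lca[OF tS, of "{\<sigma> p, \<sigma> q}" "\<mu> w'"] core' sL pL mp R0 w'V by auto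
  obtain t where t: "t \<in> ?L" "\<not> anc parT t w'"
  proof (rule ccontr)
    assume "\<not> thesis"
    then have "\<forall>t\<in>?L. anc parT t w'" using that by blast
    then have "anc parT w w'" using W w'V by blast
    moreover have "anc parT w' w" using anc_par1[of parT w'] w'V by simp
    ultimately have "w' = w" using anc_antisym[OF tT w'V(1)] by blast
    then show False using par_fix_root[OF tT w'V(1)] w'V by simp
  qed
  obtain wt where wt: "wt \<in> children VT parT r0T w" "anc parT t wt"
    using child_exists[OF tT, of t w] t W wL LV by blast
  have wtV: "wt \<in> VT" using wt unfolding children_def by auto
  have wtne: "wt \<noteq> w'" using wt t by blast
  have mt: "ple parS (Vx (\<sigma> t)) (\<mu> wt)"
  proof (cases "t = wt")
    case True then show ?thesis using R1 t LL by (auto simp: ple_def)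
  next
    case False then show ?thesis using R2 R1 t LL LV wt wtV by (metis subsetD)
  qed
  have mt': "ple parS (Vx (\<sigma> t)) (\<mu> w')" using ple_trans_Vx[OF _ uw'] U t by blast
  have comp: "ple parS (\<mu> wt) (\<mu> w') \<or> ple parS (\<mu> w') (\<mu> wt)"
    using place_comp[OF _ _ mt mt'] R0 wtV w'V by blast
  have notinner: "\<mu> w \<notin> Vx ` inner VS parS r0S"
  proof
    assume "\<mu> w \<in> Vx ` inner VS parS r0S"
    from R3[OF W(1) this wt(1) w'(1) wtne] comp show False by blast
  qed
  have uw: "ple parS (Vx u) (\<mu> w)"
  proof -
    have one: "ple parS (Vx (\<sigma> y)) (\<mu> w)" if "y \<in> ?L" for y
    proof -
      have yV: "y \<in> VT" using that LV by blast
      have "anc parT y w \<and> y \<noteq> w" using W(2) that wL[OF that] by auto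
      then have "ple parS (\<mu> y) (\<mu> w)" using R2 yV W(1) by blast
      moreover have "\<mu> y = Vx (\<sigma> y)" using R1 that LL by blast
      ultimately show ?thesis by simp
    qed
    have "\<forall>s\<in>\<sigma> ` ?L. ple parS (Vx s) (\<mu> w)"
      using one by blast
    then show ?thesis unfolding u_def using place_lca[OF tS, of "\<sigma> ` ?L" "\<mu> w"] sL R0 W by auto
  qed
  have "\<mu> w \<in> edges VS parS r0S"
  proof (rule ccontr)
    assume "\<mu> w \<notin> edges VS parS r0S"
    then obtain z where z: "\<mu> w = Vx z" "z \<in> VS" using R0 W by blast
    have zr: "z \<noteq> r0S" using R0' z W wr by auto
    define x1 where "x1 = lcaT VS parS {\<sigma> a, \<sigma> b}"
    have x1V: "x1 \<in> VS" using lca_props[OF tS, of "{\<sigma> a, \<sigma> b}"] sL unfolding x1_def by auto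
    have x1u: "anc parS x1 u" "x1 \<noteq> u" using v1' u4 unfolding x1_def by auto
    have uz: "anc parS u z" using uw z by simp
    have x1z: "anc parS x1 z" using x1u uz anc_trans by metis
    have "x1 \<noteq> z" using x1u uz anc_antisym[OF tS x1V] by blast
    then obtain ch where "ch \<in> children VS parS r0S z" using child_exists[OF tS x1V x1z] by blast
    then have "z \<in> inner VS parS r0S" using z zr unfolding inner_def by auto
    then show False using notinner z by simp
  qed
  moreover have "plt parS (Vx u) (\<mu> w)"
    using uw calculation unfolding edges_def ple_def by auto
  ultimately show ?thesis unfolding uu w_def[symmetric] by simp
qed

end
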